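(* Let $f\in\mathcal{F}$, let $A$ be a finite subset of $\mathbb{C}$ and let $b\in\mathbb{C}$. Assume that $A\subset f^{-1}(E)$ or $b\in\mathbb{C}\setminus A^{\mathrm{sym}}$. Then for every $\varepsilon>0$ there exists $g\in\mathcal{F}(f,A)$ such that $d_{\mathcal{F}}(f,g)<\varepsilon$ and $g(b)\in E$.
   Context: $\mathcal{F}$ is a Fréchet space of real and even entire maps (i.e. $f(\bar z)=\overline{f(z)}$ and $f(-z)=f(z)$) containing all real and even polynomial maps, whose topology is finer than the topology of local uniform convergence on $\mathbb{C}$; $(\|\cdot\|_j)_{j\ge0}$ is a sequence of seminorms defining its topology and $d_{\mathcal{F}}(f,g)=\sum_{j\ge0}2^{-j}\min\{1,\|f-g\|_j\}$. $E$ is a countable dense subset of $\mathbb{C}$, symmetric with respect to the real and imaginary axes, with $E\cap(\mathbb{R}\cup i\mathbb{R})$ dense in $\mathbb{R}\cup i\mathbb{R}$. For $f\in\mathcal{F}$ and $A\subseteq\mathbb{C}$, $\mathcal{F}(f,A)=\{g\in\mathcal{F}: g|_A=f|_A\text{ and } g'|_A=f'|_A\}$. For $A\subseteq\mathbb{C}$, $A^{\mathrm{sym}}=A\cup\bar A\cup(-A)\cup(-\bar A)$, where $\bar A$ is the complex conjugate of $A$. *)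

theory Defs
  imports "HOL-Analysis.Analysis"
begin

definition dF :: "(nat \<Rightarrow> (complex \<Rightarrow> complex) \<Rightarrow> real) \<Rightarrow> (complex \<Rightarrow> complex) \<Rightarrow> (complex \<Rightarrow> complex) \<Rightarrow> real" where
  "dF sn f g = (\<Sum>j. (1/2)^j * min 1 (sn j (\<lambda>z. f z - g z)))"

definition admissible_space :: "(complex \<Rightarrow> complex) set \<Rightarrow> (nat \<Rightarrow> (complex \<Rightarrow> complex) \<Rightarrow> real) \<Rightarrow> bool" where
  "admissible_space F sn \<longleftrightarrow>
     \<comment> \<open>elements are real and even entire maps\<close>
     (\<forall>f\<in>F. f holomorphic_on UNIV \<and> (\<forall>z. f (cnj z) = cnj (f z)) \<and> (\<forall>z. f (- z) = f z)) \<and>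
     \<comment> \<open>real vector space\<close>
     (\<forall>f\<in>F. \<forall>g\<in>F. (\<lambda>z. f z + g z) \<in> F) \<and>
     (\<forall>f\<in>F. \<forall>c::real. (\<lambda>z. complex_of_real c * f z) \<in> F) \<and>
     \<comment> \<open>contains all real and even polynomial maps\<close>
     (\<forall>(n::nat) (a::nat \<Rightarrow> real). (\<lambda>z. \<Sum>k\<le>n. complex_of_real (a k) * z ^ (2*k)) \<in> F) \<and>
     \<comment> \<open>each sn j is a seminorm on F\<close>
     (\<forall>j. \<forall>f\<in>F. sn j f \<ge> 0) \<and>
     (\<forall>j. \<forall>f\<in>F. \<forall>g\<in>F. sn j (\<lambda>z. f z + g z) \<le> sn j f + sn j g) \<and>
     (\<forall>j. \<forall>f\<in>F. \<forall>c::real. sn j (\<lambda>z. complex_of_real c * f z) = \<bar>c\<bar> * sn j f) \<and>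
     \<comment> \<open>Hausdorff\<close>
     (\<forall>f\<in>F. (\<forall>j. sn j f = 0) \<longrightarrow> f = (\<lambda>z. 0)) \<and>
     \<comment> \<open>complete\<close>
     (\<forall>u::nat \<Rightarrow> complex \<Rightarrow> complex. (\<forall>n. u n \<in> F) \<and>
        (\<forall>e>0. \<exists>N. \<forall>m\<ge>N. \<forall>n\<ge>N. dF sn (u m) (u n) < e) \<longrightarrow>
        (\<exists>g\<in>F. (\<lambda>n. dF sn (u n) g) \<longlonglongrightarrow> 0)) \<and>
     \<comment> \<open>topology finer than that of local uniform convergence on C\<close>
     (\<forall>K. compact K \<longrightarrow> (\<forall>e>0. \<exists>\<delta>>0. \<forall>f\<in>F. \<forall>g\<in>F.
        dF sn f g < \<delta> \<longrightarrow> (\<forall>z\<in>K. cmod (f z - g z) < e)))"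

definition admissible_E :: "complex set \<Rightarrow> bool" where
  "admissible_E E \<longleftrightarrow> countable E \<and> closure E = UNIV \<and>
     (\<forall>z\<in>E. cnj z \<in> E \<and> - z \<in> E) \<and>
     (\<real> \<union> (\<lambda>y. \<i> * y) ` \<real>) \<subseteq> closure (E \<inter> (\<real> \<union> (\<lambda>y. \<i> * y) ` \<real>))"

definition Fset :: "(complex \<Rightarrow> complex) set \<Rightarrow> (complex \<Rightarrow> complex) \<Rightarrow> complex set \<Rightarrow> (complex \<Rightarrow> complex) set" where
  "Fset F f A = {g \<in> F. \<forall>a\<in>A. g a = f a \<and> deriv g a = deriv f a}"

definition sym_set :: "complex set \<Rightarrow> complex set" where
  "sym_set A = A \<union> cnj ` A \<union> uminus ` A \<union> (\<lambda>z. - cnj z) ` A"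

end

theory Submission imports Defs "HOL-Computational_Algebra.Polynomial" begin

lemma map_poly_of_real_mult:
  "map_poly (of_real :: real \<Rightarrow> complex) (p * q) = map_poly of_real p * map_poly of_real q"
  by (simp add: poly_eq_iff coeff_mult coeff_map_poly)

lemma map_poly_of_real_prod:
  assumes "finite S"
  shows "map_poly (of_real :: real \<Rightarrow> complex) (\<Prod>a\<in>S. r a) = (\<Prod>a\<in>S. map_poly of_real (r a))"
  using assms by (induction S rule: finite_induct) (auto simp: map_poly_of_real_mult)

lemma adm_hol: assumes "admissible_space F sn" shows "\<forall>f\<in>F. f holomorphic_on UNIV \<and> (\<forall>z. f (cnj z) = cnj (f z)) \<and> (\<forall>z. f (- z) = f z)"
  using assms unfolding admissible_space_def apply (elim conjE) apply assumption done

lemma adm_add: assumes "admissible_space F sn" shows "\<forall>f\<in>F. \<forall>g\<in>F. (\<lambda>z. f z + g z) \<in> F"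
  using assms unfolding admissible_space_def apply (elim conjE) apply assumption done

lemma adm_smul: assumes "admissible_space F sn" shows "\<forall>f\<in>F. \<forall>c::real. (\<lambda>z. complex_of_real c * f z) \<in> F"
  using assms unfolding admissible_space_def apply (elim conjE) apply assumption done

lemma adm_poly: assumes "admissible_space F sn" shows "\<forall>(n::nat) (a::nat \<Rightarrow> real). (\<lambda>z. \<Sum>k\<le>n. complex_of_real (a k) * z ^ (2*k)) \<in> F"
  using assms unfolding admissible_space_def apply (elim conjE) apply assumption done

lemma adm_nn: assumes "admissible_space F sn" shows "\<forall>j. \<forall>f\<in>F. sn j f \<ge> 0"
  using assms unfolding admissible_space_def apply (elim conjE) apply assumption done

lemma adm_tri: assumes "admissible_space F sn" shows "\<forall>j. \<forall>f\<in>F. \<forall>g\<in>F. sn j (\<lambda>z. f z + g z) \<le> sn j f + sn j g"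
  using assms unfolding admissible_space_def apply (elim conjE) apply assumption done

lemma adm_hom: assumes "admissible_space F sn" shows "\<forall>j. \<forall>f\<in>F. \<forall>c::real. sn j (\<lambda>z. complex_of_real c * f z) = \<bar>c\<bar> * sn j f"
  using assms unfolding admissible_space_def apply (elim conjE) apply assumption done

lemma Q_in_F:
  assumes "admissible_space F sn"
  shows "(\<lambda>z. poly (map_poly (of_real :: real \<Rightarrow> complex) r) (z^2)) \<in> F"
proof -
  have deg: "degree (map_poly (of_real :: real \<Rightarrow> complex) r) = degree r"
    by (rule degree_map_poly) simp
  have "(\<lambda>z. poly (map_poly (of_real :: real \<Rightarrow> complex) r) (z^2)) =
        (\<lambda>z. \<Sum>k\<le>degree r. complex_of_real (coeff r k) * z ^ (2*k))"
    by (rule ext) (simp add: poly_altdef deg coeff_map_poly power_mult)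
  moreover have "(\<lambda>z. \<Sum>k\<le>degree r. complex_of_real (coeff r k) * z ^ (2*k)) \<in> F"
    using adm_poly[OF assms] by blast
  ultimately show ?thesis by simp
qed

lemma poly_quad: "poly (map_poly (of_real :: real \<Rightarrow> complex) [: (cmod \<alpha>)^2, -2*Re \<alpha>, 1 :]) w
   = (w - \<alpha>) * (w - cnj \<alpha>)"
proof -
  have "complex_of_real ((cmod \<alpha>)^2) = \<alpha> * cnj \<alpha>" using complex_norm_square[of \<alpha>] by simp
  moreover have "complex_of_real (2 * Re \<alpha>) = \<alpha> + cnj \<alpha>" by (simp add: complex_add_cnj)
  ultimately show ?thesis by (simp add: map_poly_pCons algebra_simps)
qed

lemma sum_bound:
  fixes x :: "nat \<Rightarrow> real"
  assumes "\<And>j. 0 \<le> x j"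
  shows "(\<Sum>j. (1/2)^j * min 1 (x j)) \<le> (\<Sum>j<N. x j) + 2*(1/2)^N"
proof -
  define t where "t j = (1/2::real)^j * min 1 (x j)" for j
  have t0: "0 \<le> t j" for j using assms by (simp add: t_def)
  have t1: "t j \<le> (1/2)^j" for j by (simp add: t_def)
  have st: "summable t"
    by (rule summable_comparison_test[of _ "\<lambda>j. (1/2::real)^j"]) (use t0 t1 in auto)
  have "suminf t = (\<Sum>j. t (j+N)) + (\<Sum>j<N. t j)" by (rule suminf_split_initial_segment[OF st])
  also have "(\<Sum>j. t (j+N)) \<le> (\<Sum>j. (1/2::real)^N * (1/2)^j)"
  proof (rule suminf_le)
    show "t (j+N) \<le> (1/2)^N * (1/2)^j" for j using t1[of "j+N"] by (simp add: power_add mult.commute)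
    show "summable (\<lambda>j. t (j + N))" using st by (simp add: summable_iff_shift)
    show "summable (\<lambda>j. (1/2::real)^N * (1/2)^j)" by (intro summable_mult summable_geometric) simp
  qed
  also have "(\<Sum>j. (1/2::real)^N * (1/2)^j) = 2*(1/2)^N"
    using suminf_mult[OF summable_geometric[of "1/2::real"]] suminf_geometric[of "1/2::real"] by simp
  also have "(\<Sum>j<N. t j) \<le> (\<Sum>j<N. x j)"
  proof (rule sum_mono)
    fix j have "(1/2::real)^j \<le> 1" by (simp add: power_le_one)
    moreover have "0 \<le> min 1 (x j)" using assms[of j] by simp
    ultimately have "(1/2::real)^j * min 1 (x j) \<le> min 1 (x j)"
      by (intro mult_left_le_one_le) auto
    then show "t j \<le> x j" unfolding t_def by linarith
  qed
  finally show ?thesis unfolding t_def by simp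
qed


lemma dF_small:
  assumes adm: "admissible_space F sn" and fF: "f \<in> F" and p1F: "p1 \<in> F" and p2F: "p2 \<in> F"
    and e: "\<epsilon> > 0"
  shows "\<exists>\<delta>>0. \<forall>c1 c2. \<bar>c1\<bar> < \<delta> \<and> \<bar>c2\<bar> < \<delta> \<longrightarrow>
     dF sn f (\<lambda>z. f z + complex_of_real c1 * p1 z + complex_of_real c2 * p2 z) < \<epsilon>"
proof -
  have smul: "\<And>p c. p \<in> F \<Longrightarrow> (\<lambda>z. complex_of_real c * p z) \<in> F"
    using adm_smul[OF adm] by blast
  have nn: "\<And>j p. p \<in> F \<Longrightarrow> sn j p \<ge> 0"
    using adm_nn[OF adm] by blast
  have tri: "\<And>j p q. p \<in> F \<Longrightarrow> q \<in> F \<Longrightarrow> sn j (\<lambda>z. p z + q z) \<le> sn j p + sn j q"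
    using adm_tri[OF adm] by blast
  have hom: "\<And>j p c. p \<in> F \<Longrightarrow> sn j (\<lambda>z. complex_of_real c * p z) = \<bar>c\<bar> * sn j p"
    using adm_hom[OF adm] by blast
  obtain N where N: "(1/2::real)^N < \<epsilon>/4"
    using real_arch_pow_inv[of "\<epsilon>/4" "1/2::real"] e by auto
  define S where "S = (\<Sum>j<N. sn j p1 + sn j p2)"
  have S0: "S \<ge> 0" unfolding S_def by (intro sum_nonneg add_nonneg_nonneg nn p1F p2F)
  define \<delta> where "\<delta> = \<epsilon> / (2*(S+1))"
  have d0: "\<delta> > 0" using e S0 by (simp add: \<delta>_def)
  show ?thesis
  proof (intro exI[of _ \<delta>] conjI allI impI d0)
    fix c1 c2 assume c: "\<bar>c1\<bar> < \<delta> \<and> \<bar>c2\<bar> < \<delta>"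
    define x where "x j = sn j (\<lambda>z. f z - (f z + complex_of_real c1 * p1 z + complex_of_real c2 * p2 z))" for j
    have eqf: "(\<lambda>z. f z - (f z + complex_of_real c1 * p1 z + complex_of_real c2 * p2 z)) =
      (\<lambda>z. complex_of_real (-c1) * p1 z + complex_of_real (-c2) * p2 z)" by (rule ext) simp
    have x0: "0 \<le> x j" for j
      unfolding x_def eqf
      by (rule nn[OF adm_add[OF adm, rule_format, OF smul[OF p1F] smul[OF p2F]]])
    have xle: "x j \<le> \<delta> * (sn j p1 + sn j p2)" for j
    proof -
      have "x j \<le> sn j (\<lambda>z. complex_of_real (-c1) * p1 z) + sn j (\<lambda>z. complex_of_real (-c2) * p2 z)"
        unfolding x_def eqf by (rule tri[OF smul[OF p1F] smul[OF p2F]])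
      also have "\<dots> = \<bar>c1\<bar> * sn j p1 + \<bar>c2\<bar> * sn j p2" by (simp only: hom[OF p1F] hom[OF p2F] abs_minus_cancel)
      also have "\<dots> \<le> \<delta> * sn j p1 + \<delta> * sn j p2"
        using c nn[OF p1F, of j] nn[OF p2F, of j] by (intro add_mono mult_right_mono) auto
      finally show ?thesis by (simp add: algebra_simps)
    qed
    have "dF sn f (\<lambda>z. f z + complex_of_real c1 * p1 z + complex_of_real c2 * p2 z)
        = (\<Sum>j. (1/2)^j * min 1 (x j))" by (simp add: dF_def x_def)
    also have "\<dots> \<le> (\<Sum>j<N. x j) + 2*(1/2)^N" by (rule sum_bound[OF x0])
    also have "(\<Sum>j<N. x j) \<le> \<delta> * S"
      unfolding S_def sum_distrib_left by (rule sum_mono) (rule xle)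
    also have "\<delta> * S < \<epsilon>/2"
    proof -
      have "\<delta> * S = \<epsilon> * S / (2*(S+1))" by (simp add: \<delta>_def)
      also have "\<dots> < \<epsilon>/2" using e S0 by (simp add: field_simps)
      finally show ?thesis .
    qed
    finally show "dF sn f (\<lambda>z. f z + complex_of_real c1 * p1 z + complex_of_real c2 * p2 z) < \<epsilon>"
      using N by linarith
  qed
qed

lemma F_real:
  assumes "admissible_space F sn" "q \<in> F" "Re b = 0 \<or> Im b = 0"
  shows "Im (q b) = 0"
proof -
  have c: "q (cnj z) = cnj (q z)" and ev: "q (-z) = q z" for z
    using adm_hol[OF assms(1)] assms(2) by blast+
  from assms(3) show ?thesis
  proof
    assume "Re b = 0"
    then have "cnj b = - b" by (simp add: complex_eq_iff)
    then have "q b = cnj (q b)" using c[of b] ev[of b] by simp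
    from arg_cong[OF this, of Im] show ?thesis by simp
  next
    assume "Im b = 0"
    then have "cnj b = b" by (simp add: complex_eq_iff)
    then have "q b = cnj (q b)" using c[of b] by simp
    from arg_cong[OF this, of Im] show ?thesis by simp
  qed
qed


lemma deriv_part:
  assumes fh: "f holomorphic_on UNIV" and hh: "h holomorphic_on UNIV" and ha: "h a = 0"
  shows "deriv (\<lambda>z. f z + complex_of_real c1 * (h z)^2 + complex_of_real c2 * (z^2 * (h z)^2)) a = deriv f a"
proof -
  have df: "(f has_field_derivative deriv f a) (at a)" by (rule holomorphic_derivI[OF fh]) auto
  have dh: "(h has_field_derivative deriv h a) (at a)" by (rule holomorphic_derivI[OF hh]) auto
  have "((\<lambda>z. f z + complex_of_real c1 * (h z)^2 + complex_of_real c2 * (z^2 * (h z)^2)) has_field_derivative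
     deriv f a) (at a)"
    by (rule derivative_eq_intros df dh refl | simp add: ha)+
  then show ?thesis by (rule DERIV_imp_deriv)
qed


theorem lemma3p3:
  fixes F :: "(complex \<Rightarrow> complex) set"
    and sn :: "nat \<Rightarrow> (complex \<Rightarrow> complex) \<Rightarrow> real"
    and E :: "complex set" and f :: "complex \<Rightarrow> complex"
    and A :: "complex set" and b :: complex
  assumes "admissible_space F sn"
    and "admissible_E E"
    and "f \<in> F"
    and "finite A"
    and "A \<subseteq> f -` E \<or> b \<notin> sym_set A"
  shows "\<forall>\<epsilon>>0. \<exists>g\<in>Fset F f A. dF sn f g < \<epsilon> \<and> g b \<in> E"
proof (intro allI impI)
  fix \<epsilon> :: real assume e: "\<epsilon> > 0"
  note adm = assms(1)
  have fF: "f \<in> F" by fact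
  have fin: "finite A" by fact
  have fhol: "f holomorphic_on UNIV" and fc: "\<And>z. f (cnj z) = cnj (f z)" and fe: "\<And>z. f (-z) = f z"
    using adm_hol[OF adm] fF by blast+
  have Esym: "\<And>z. z \<in> E \<Longrightarrow> cnj z \<in> E \<and> - z \<in> E" and Edense: "closure E = UNIV"
    and Eax: "(\<real> \<union> (\<lambda>y. \<i> * y) ` \<real>) \<subseteq> closure (E \<inter> (\<real> \<union> (\<lambda>y. \<i> * y) ` \<real>))"
    using assms(2) unfolding admissible_E_def by blast+
  have smul: "\<And>p c. p \<in> F \<Longrightarrow> (\<lambda>z. complex_of_real c * p z) \<in> F"
    using adm_smul[OF adm] by blast
  have add: "\<And>p q. p \<in> F \<Longrightarrow> q \<in> F \<Longrightarrow> (\<lambda>z. p z + q z) \<in> F"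
    using adm_add[OF adm] by blast
  have nn: "\<And>j p. p \<in> F \<Longrightarrow> sn j p \<ge> 0"
    using adm_nn[OF adm] by blast
  have hom: "\<And>j p c. p \<in> F \<Longrightarrow> sn j (\<lambda>z. complex_of_real c * p z) = \<bar>c\<bar> * sn j p"
    using adm_hom[OF adm] by blast
  show "\<exists>g\<in>Fset F f A. dF sn f g < \<epsilon> \<and> g b \<in> E"
  proof (cases "b \<in> sym_set A")
    case True
    then have AE: "A \<subseteq> f -` E" using assms(5) by blast
    have fbE: "f b \<in> E"
      using True unfolding sym_set_def
    proof (elim UnE imageE)
      assume "b \<in> A" then show ?thesis using AE by blast
    next
      fix a assume "b = cnj a" "a \<in> A" then show ?thesis using AE Esym fc by auto
    next
      fix a assume "b = - a" "a \<in> A" then show ?thesis using AE Esym fe by auto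
    next
      fix a assume "b = - cnj a" "a \<in> A" then show ?thesis using AE Esym fc fe by auto
    qed
    have "(\<lambda>z. f z - f z) = (\<lambda>z. complex_of_real 0 * f z)" by simp
    then have "sn j (\<lambda>z. f z - f z) = 0" for j using hom[OF fF, of j 0] by simp
    then have "dF sn f f = 0" by (simp add: dF_def)
    moreover have "f \<in> Fset F f A" using fF by (simp add: Fset_def)
    ultimately show ?thesis using e fbE by (intro bexI[of _ f]) auto
  next
    case False
    define h where "h = (\<lambda>z. \<Prod>a\<in>A. (z^2 - a^2) * (z^2 - cnj a ^2))"
    define rh where "rh = (\<Prod>a\<in>A. [: (cmod (a^2))^2, -2*Re (a^2), 1 :])"
    have h_poly: "poly (map_poly complex_of_real rh) w = (\<Prod>a\<in>A. (w - a^2) * (w - cnj a ^2))" for w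
    proof -
      have "poly (map_poly complex_of_real rh) w = (\<Prod>a\<in>A. poly (map_poly complex_of_real [: (cmod (a^2))^2, -2*Re (a^2), 1 :]) w)"
        unfolding rh_def map_poly_of_real_prod[OF fin] poly_prod by (rule refl)
      also have "\<dots> = (\<Prod>a\<in>A. (w - a^2) * (w - cnj (a^2)))"
        by (rule prod.cong[OF refl]) (rule poly_quad)
      finally show ?thesis by simp
    qed
    define p1 where "p1 = (\<lambda>z. (h z)^2)"
    define p2 where "p2 = (\<lambda>z. z^2 * (h z)^2)"
    have "p1 = (\<lambda>z. poly (map_poly complex_of_real (rh*rh)) (z^2))"
      by (rule ext) (simp add: p1_def h_def map_poly_of_real_mult h_poly power2_eq_square)
    then have p1F: "p1 \<in> F" using Q_in_F[OF adm] by simp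
    have "p2 = (\<lambda>z. poly (map_poly complex_of_real ([:0,1:]*rh*rh)) (z^2))"
      by (rule ext) (simp add: p2_def h_def map_poly_of_real_mult h_poly power2_eq_square map_poly_pCons)
    then have p2F: "p2 \<in> F" using Q_in_F[OF adm] by simp
    have hA: "h a = 0" if "a \<in> A" for a
      unfolding h_def using that fin by (auto simp: prod_zero_iff)
    have hb: "h b \<noteq> 0"
    proof
      assume "h b = 0"
      then obtain a where a: "a \<in> A" "(b^2 - a^2) * (b^2 - cnj a ^2) = 0"
        unfolding h_def using fin by (auto simp: prod_zero_iff)
      then have "b^2 = a^2 \<or> b^2 = cnj a ^2" by auto
      then have "b = a \<or> b = -a \<or> b = cnj a \<or> b = - cnj a" by (auto simp: power2_eq_iff)
      then have "b \<in> sym_set A" using a(1) unfolding sym_set_def by auto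
      then show False using False by simp
    qed
    have hhol: "h holomorphic_on UNIV" unfolding h_def by (intro holomorphic_intros)
    define g where "g = (\<lambda>c1 c2 z. f z + complex_of_real c1 * p1 z + complex_of_real c2 * p2 z)"
    have gF: "g c1 c2 \<in> Fset F f A" for c1 c2
    proof -
      have "g c1 c2 \<in> F" unfolding g_def
      proof -
        have "(\<lambda>z. f z + complex_of_real c1 * p1 z) \<in> F" by (rule add[OF fF smul[OF p1F]])
        then show "(\<lambda>z. f z + complex_of_real c1 * p1 z + complex_of_real c2 * p2 z) \<in> F"
          by (rule add[OF _ smul[OF p2F]])
      qed
      moreover have "g c1 c2 a = f a" if "a \<in> A" for a
        using hA[OF that] by (simp add: g_def p1_def p2_def)
      moreover have "deriv (g c1 c2) a = deriv f a" if "a \<in> A" for a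
        unfolding g_def p1_def p2_def by (rule deriv_part[OF fhol hhol hA[OF that]])
      ultimately show ?thesis by (simp add: Fset_def)
    qed
    obtain \<delta> where d0: "\<delta> > 0" and dsm: "\<And>c1 c2. \<bar>c1\<bar> < \<delta> \<Longrightarrow> \<bar>c2\<bar> < \<delta> \<Longrightarrow> dF sn f (g c1 c2) < \<epsilon>"
      using dF_small[OF adm fF p1F p2F e] unfolding g_def by blast
    define H where "H = p1 b"
    have H0: "H \<noteq> 0" using hb by (simp add: H_def p1_def)
    show ?thesis
    proof (cases "Re b = 0 \<or> Im b = 0")
      case True
      have Imu: "Im (f b) = 0" by (rule F_real[OF adm fF True])
      have ImH: "Im H = 0" unfolding H_def by (rule F_real[OF adm p1F True])
      have ReH: "Re H \<noteq> 0" using H0 ImH by (auto simp: complex_eq_iff)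
      define u where "u = Re (f b)"
      define \<rho> where "\<rho> = \<delta> * \<bar>Re H\<bar>"
      have r0: "\<rho> > 0" using d0 ReH by (simp add: \<rho>_def)
      define t where "t = (if u \<ge> 0 then u + \<rho>/2 else u - \<rho>/2)"
      have t0: "t \<noteq> 0" and tu: "\<bar>t - u\<bar> = \<rho>/2" using r0 by (auto simp: t_def)
      define r where "r = min (\<rho>/2) \<bar>t\<bar>"
      have rpos: "r > 0" using r0 t0 by (simp add: r_def)
      have "complex_of_real t \<in> closure (E \<inter> (\<real> \<union> (\<lambda>y. \<i> * y) ` \<real>))" using Eax by auto
      then obtain y where y: "y \<in> E" "y \<in> \<real> \<union> (\<lambda>y. \<i> * y) ` \<real>" "dist y (complex_of_real t) < r"
        using rpos unfolding closure_approachable by blast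
      have yt: "\<bar>Re y - t\<bar> < r"
        using y(3) abs_Re_le_cmod[of "y - complex_of_real t"] by (simp add: dist_norm)
      have Imy: "Im y = 0"
      proof (rule ccontr)
        assume "Im y \<noteq> 0"
        then have "y \<in> (\<lambda>y. \<i> * y) ` \<real>" using y(2) by (auto simp: complex_is_Real_iff)
        then have "Re y = 0" by (auto elim!: Reals_cases)
        then show False using yt r_def by auto
      qed
      define c1 where "c1 = (Re y - u) / Re H"
      have "\<bar>Re y - u\<bar> < \<rho>" using yt tu r_def by linarith
      then have "\<bar>c1\<bar> < \<delta>" using ReH by (simp add: c1_def \<rho>_def abs_divide divide_less_eq mult.commute)
      then have "dF sn f (g c1 0) < \<epsilon>" using d0 by (intro dsm) auto
      moreover have "g c1 0 b = y"
        using ReH Imu ImH Imy by (simp add: g_def H_def[symmetric] c1_def u_def complex_eq_iff)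
      ultimately show ?thesis using gF[of c1 0] y(1) by (intro bexI[of _ "g c1 0"]) auto
    next
      case False
      define \<beta> where "\<beta> = b^2"
      have Imb: "Im \<beta> \<noteq> 0" using False by (simp add: \<beta>_def power2_eq_square)
      have p2b: "p2 b = \<beta> * H" by (simp add: p2_def H_def p1_def \<beta>_def)
      define K where "K = 1 + (1 + \<bar>Re \<beta>\<bar>) / \<bar>Im \<beta>\<bar>"
      have K1: "K \<ge> 1" using Imb by (simp add: K_def)
      define r where "r = \<delta> * cmod H / K"
      have rpos: "r > 0" using d0 H0 K1 by (simp add: r_def)
      obtain y where y: "y \<in> E" "dist y (f b) < r"
        using Edense rpos closure_approachable[of "f b" E] by auto
      define w where "w = (y - f b) / H"
      have wm: "cmod w * K < \<delta>"
      proof -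
        have "cmod w = dist y (f b) / cmod H" by (simp add: w_def dist_norm norm_divide)
        also have "\<dots> < r / cmod H" using y(2) H0 by (simp add: divide_strict_right_mono)
        finally have "cmod w < \<delta> / K" using H0 by (simp add: r_def)
        then show ?thesis using K1 by (simp add: pos_less_divide_eq)
      qed
      define c2 where "c2 = Im w / Im \<beta>"
      define c1 where "c1 = Re w - c2 * Re \<beta>"
      have mK: "cmod w * K = cmod w + cmod w / \<bar>Im \<beta>\<bar> + cmod w * \<bar>Re \<beta>\<bar> / \<bar>Im \<beta>\<bar>"
        using Imb by (simp add: K_def field_simps)
      have c2b: "\<bar>c2\<bar> \<le> cmod w / \<bar>Im \<beta>\<bar>"
        using abs_Im_le_cmod[of w] Imb by (simp add: c2_def abs_divide divide_right_mono)
      have "\<bar>c2 * Re \<beta>\<bar> \<le> cmod w * \<bar>Re \<beta>\<bar> / \<bar>Im \<beta>\<bar>"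
      proof -
        have "\<bar>c2\<bar> * \<bar>Re \<beta>\<bar> \<le> cmod w / \<bar>Im \<beta>\<bar> * \<bar>Re \<beta>\<bar>"
          by (rule mult_right_mono[OF c2b]) simp
        also have "\<dots> = cmod w * \<bar>Re \<beta>\<bar> / \<bar>Im \<beta>\<bar>" by simp
        finally show ?thesis by (simp add: abs_mult)
      qed
      then have "\<bar>c1\<bar> \<le> cmod w + cmod w * \<bar>Re \<beta>\<bar> / \<bar>Im \<beta>\<bar>"
        using abs_Re_le_cmod[of w] unfolding c1_def by linarith
      moreover have "0 \<le> cmod w / \<bar>Im \<beta>\<bar>" by simp
      ultimately have c1s: "\<bar>c1\<bar> < \<delta>" and c2s: "\<bar>c2\<bar> < \<delta>" using mK wm c2b by linarith+
      have wc: "complex_of_real c1 + complex_of_real c2 * \<beta> = w"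
        using Imb by (simp add: complex_eq_iff c1_def c2_def)
      have "g c1 c2 b = f b + H * (complex_of_real c1 + complex_of_real c2 * \<beta>)"
        by (simp add: g_def p2b H_def[symmetric] algebra_simps)
      also have "\<dots> = y" using H0 by (simp add: wc w_def)
      finally have "g c1 c2 b = y" .
      then show ?thesis using gF[of c1 c2] y(1) dsm[OF c1s c2s] by (intro bexI[of _ "g c1 c2"]) auto
    qed
  qed
qed

end
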